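(* In the Rustichini setting, let $F\in\mathcal F$ and $x,y\in\operatorname{ri}(F)$. Then $\mathcal N(x)=\mathcal N(y)$.
   Context: Rustichini setting: a $k$-action partial monitoring game with finite latent space $\mathcal Z$, loss $\mathcal L:[k]\times\mathcal Z\to[0,1]$, signal $\mathcal S:[k]\times\mathcal Z\to\Sigma$; $\mathcal K$ = probability simplex on $\mathcal Z$; $\Delta_k$ = probability simplex on $[k]$; $\mathcal L(\pi,x)=\sum_a\sum_z\pi(a)x(z)\mathcal L(a,z)$; $\mathcal S(a,x)$ = law of $\mathcal S(a,z)$, $z\sim x$; $x\,\mathrm R\,y$ iff $\mathcal S(a,x)=\mathcal S(a,y)$ for all $a$; $\mathcal V(\pi,x)=\sup_{y\,\mathrm R\,x}\mathcal L(\pi,y)$; $\mathcal V_\star(x)=\min_{\pi\in\Delta_k}\mathcal V(\pi,x)$; $\Delta(\pi,x)=\mathcal V(\pi,x)-\mathcal V_\star(x)$. $\mathcal V_\star$ is concave piecewise linear and $m$ is the smallest integer with $\mathcal V_\star(x)=\min_{\alpha\in[m]}\mathcal V^m(x)_\alpha$ for some linear $\mathcal V^m:\mathcal K\to\mathbb R^m$. For $\alpha\in[m]$ the cell is the polytope $P_\alpha=\{x\in\mathcal K:\mathcal V_\star(x)=\mathcal V^m(x)_\alpha\}$, and $\mathcal F=\bigcup_{\alpha\in[m]}\operatorname{faces}(P_\alpha)$ (faces include the polytope itself and $\emptyset$). $\mathcal N(x)=\{\pi\in\Delta_k:\Delta(\pi,x)=0\}$. $\operatorname{ri}$ denotes relative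 interior. *)

theory Defs
  imports "HOL-Analysis.Analysis"
begin

text \<open>Actions are the elements of a finite type 'a (so k = CARD('a));
  the latent space is a finite type 'z; signals take values in a type 'b.\<close>

definition simplexK :: "(real^'z::finite) set" where
  "simplexK = {x. (\<forall>z. 0 \<le> x$z) \<and> (\<Sum>z\<in>UNIV. x$z) = 1}"

definition actsimplex :: "('a::finite \<Rightarrow> real) set" where
  "actsimplex = {p. (\<forall>a. 0 \<le> p a) \<and> (\<Sum>a\<in>UNIV. p a) = 1}"

definition lossmix :: "('a::finite \<Rightarrow> 'z::finite \<Rightarrow> real) \<Rightarrow> ('a \<Rightarrow> real) \<Rightarrow> real^'z \<Rightarrow> real" where
  "lossmix L p x = (\<Sum>a\<in>UNIV. \<Sum>z\<in>UNIV. p a * x$z * L a z)"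

text \<open>Equality of the laws of S(a,z), z ~ x and z ~ y, for every action a.\<close>
definition sigrel :: "('a \<Rightarrow> 'z::finite \<Rightarrow> 'b) \<Rightarrow> real^'z \<Rightarrow> real^'z \<Rightarrow> bool" where
  "sigrel S x y \<longleftrightarrow> (\<forall>a \<sigma>. (\<Sum>z\<in>{z. S a z = \<sigma>}. x$z) = (\<Sum>z\<in>{z. S a z = \<sigma>}. y$z))"

definition Vfun :: "('a::finite \<Rightarrow> 'z::finite \<Rightarrow> real) \<Rightarrow> ('a \<Rightarrow> 'z \<Rightarrow> 'b) \<Rightarrow> ('a \<Rightarrow> real) \<Rightarrow> real^'z \<Rightarrow> real" where
  "Vfun L S p x = (SUP y\<in>{y\<in>simplexK. sigrel S y x}. lossmix L p y)"

definition Vstar :: "('a::finite \<Rightarrow> 'z::finite \<Rightarrow> real) \<Rightarrow> ('a \<Rightarrow> 'z \<Rightarrow> 'b) \<Rightarrow> real^'z \<Rightarrow> real" where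
  "Vstar L S x = (INF p\<in>actsimplex. Vfun L S p x)"

definition regret :: "('a::finite \<Rightarrow> 'z::finite \<Rightarrow> real) \<Rightarrow> ('a \<Rightarrow> 'z \<Rightarrow> 'b) \<Rightarrow> ('a \<Rightarrow> real) \<Rightarrow> real^'z \<Rightarrow> real" where
  "regret L S p x = Vfun L S p x - Vstar L S x"

definition Nset :: "('a::finite \<Rightarrow> 'z::finite \<Rightarrow> real) \<Rightarrow> ('a \<Rightarrow> 'z \<Rightarrow> 'b) \<Rightarrow> real^'z \<Rightarrow> ('a \<Rightarrow> real) set" where
  "Nset L S x = {p\<in>actsimplex. regret L S p x = 0}"

definition is_rep :: "('a::finite \<Rightarrow> 'z::finite \<Rightarrow> real) \<Rightarrow> ('a \<Rightarrow> 'z \<Rightarrow> 'b) \<Rightarrow> nat \<Rightarrow> (nat \<Rightarrow> real^'z) \<Rightarrow> bool" where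
  "is_rep L S m c \<longleftrightarrow> 0 < m \<and> (\<forall>x\<in>simplexK. Vstar L S x = Min ((\<lambda>\<alpha>. c \<alpha> \<bullet> x) ` {..<m}))"

definition min_rep :: "('a::finite \<Rightarrow> 'z::finite \<Rightarrow> real) \<Rightarrow> ('a \<Rightarrow> 'z \<Rightarrow> 'b) \<Rightarrow> nat \<Rightarrow> (nat \<Rightarrow> real^'z) \<Rightarrow> bool" where
  "min_rep L S m c \<longleftrightarrow> is_rep L S m c \<and> (\<forall>m' (c'::nat \<Rightarrow> real^'z). is_rep L S m' c' \<longrightarrow> m \<le> m')"

definition cell :: "('a::finite \<Rightarrow> 'z::finite \<Rightarrow> real) \<Rightarrow> ('a \<Rightarrow> 'z \<Rightarrow> 'b) \<Rightarrow> (nat \<Rightarrow> real^'z) \<Rightarrow> nat \<Rightarrow> (real^'z) set" where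
  "cell L S c \<alpha> = {x\<in>simplexK. Vstar L S x = c \<alpha> \<bullet> x}"

end

theory Submission
  imports Defs
begin

lemma sigrel_refl: "sigrel S x x" by (simp add: sigrel_def)

lemma sigrel_comb:
  assumes "sigrel S y1 y" "sigrel S z1 z"
  shows "sigrel S (t *\<^sub>R y1 + (1-t) *\<^sub>R z1) (t *\<^sub>R y + (1-t) *\<^sub>R z)"
  using assms by (simp add: sigrel_def sum.distrib sum_distrib_left[symmetric])

lemma simplexK_comb:
  assumes "y \<in> simplexK" "z \<in> simplexK" "0 \<le> t" "t \<le> 1"
  shows "t *\<^sub>R y + (1-t) *\<^sub>R z \<in> simplexK"
  using assms by (auto simp: simplexK_def sum.distrib sum_distrib_left[symmetric])

lemma lossmix_comb:
  "lossmix L p (t *\<^sub>R y + (1-t) *\<^sub>R z) = t * lossmix L p y + (1-t) * lossmix L p z"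
proof -
  have "lossmix L p (t *\<^sub>R y + (1-t) *\<^sub>R z) = (\<Sum>a\<in>UNIV. \<Sum>w\<in>UNIV. t * (p a * y$w * L a w) + (1-t) * (p a * z$w * L a w))"
    unfolding lossmix_def by (intro sum.cong refl) (simp add: algebra_simps)
  also have "\<dots> = t * lossmix L p y + (1-t) * lossmix L p z"
    unfolding lossmix_def by (simp add: sum.distrib sum_distrib_left)
  finally show ?thesis .
qed

lemma lossmix_nonneg:
  assumes "\<And>a z. 0 \<le> L a z \<and> L a z \<le> 1" "p \<in> actsimplex" "y \<in> simplexK"
  shows "0 \<le> lossmix L p y"
  using assms unfolding lossmix_def actsimplex_def simplexK_def
  by (intro sum_nonneg) auto

lemma lossmix_le1:
  assumes "\<And>a z. 0 \<le> L a z \<and> L a z \<le> 1" "p \<in> actsimplex" "y \<in> simplexK"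
  shows "lossmix L p y \<le> 1"
proof -
  have "lossmix L p y \<le> (\<Sum>a\<in>UNIV. \<Sum>z\<in>UNIV. p a * y$z)"
    unfolding lossmix_def
    apply (intro sum_mono)
    using assms unfolding actsimplex_def simplexK_def
    by (simp add: mult_left_le)
  also have "\<dots> = 1" using assms(2,3) unfolding actsimplex_def simplexK_def
    by (simp add: sum_distrib_left[symmetric])
  finally show ?thesis .
qed

lemma Vfun_upper:
  assumes "\<And>a z. 0 \<le> L a z \<and> L a z \<le> 1" "p \<in> actsimplex" "y1 \<in> simplexK" "sigrel S y1 x"
  shows "lossmix L p y1 \<le> Vfun L S p x"
  unfolding Vfun_def
  apply (rule cSUP_upper)
  using assms apply simp
  apply (rule bdd_aboveI[where M=1])
  using assms lossmix_le1 by blast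

lemma Vfun_least:
  assumes "x \<in> simplexK" "\<And>y1. y1 \<in> simplexK \<Longrightarrow> sigrel S y1 x \<Longrightarrow> lossmix L p y1 \<le> C"
  shows "Vfun L S p x \<le> C"
  unfolding Vfun_def
  apply (rule cSUP_least)
  using assms sigrel_refl by auto

lemma Vfun_nonneg:
  assumes "\<And>a z. 0 \<le> L a z \<and> L a z \<le> 1" "p \<in> actsimplex" "x \<in> simplexK"
  shows "0 \<le> Vfun L S p x"
  using Vfun_upper[of L p x S x] lossmix_nonneg[of L p x] assms sigrel_refl by fastforce

lemma Vstar_le:
  assumes "\<And>a z. 0 \<le> L a z \<and> L a z \<le> 1" "p \<in> actsimplex" "x \<in> simplexK"
  shows "Vstar L S x \<le> Vfun L S p x"
  unfolding Vstar_def
  apply (rule cINF_lower)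
   apply (rule bdd_belowI[where m=0])
  using assms Vfun_nonneg by blast+

lemma key:
  assumes L: "\<And>a z. 0 \<le> L a z \<and> L a z \<le> 1" and p: "p \<in> actsimplex"
    and K: "y \<in> simplexK" "z \<in> simplexK"
    and t: "0 < t" "t < 1"
    and cy: "Vstar L S y = c \<bullet> y" and cz: "Vstar L S z = c \<bullet> z"
    and hx: "Vfun L S p (t *\<^sub>R y + (1-t) *\<^sub>R z) \<le> c \<bullet> (t *\<^sub>R y + (1-t) *\<^sub>R z)"
  shows "Vfun L S p y \<le> c \<bullet> y"
proof (rule Vfun_least[OF K(1)])
  fix y1 assume y1: "y1 \<in> simplexK" "sigrel S y1 y"
  have "(1-t) * Vfun L S p z \<le> c \<bullet> (t *\<^sub>R y + (1-t) *\<^sub>R z) - t * lossmix L p y1"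
  proof -
    have "Vfun L S p z \<le> (c \<bullet> (t *\<^sub>R y + (1-t) *\<^sub>R z) - t * lossmix L p y1) / (1-t)"
    proof (rule Vfun_least[OF K(2)])
      fix z1 assume z1: "z1 \<in> simplexK" "sigrel S z1 z"
      have "lossmix L p (t *\<^sub>R y1 + (1-t) *\<^sub>R z1) \<le> Vfun L S p (t *\<^sub>R y + (1-t) *\<^sub>R z)"
        using Vfun_upper[OF L p simplexK_comb[OF y1(1) z1(1)] sigrel_comb[OF y1(2) z1(2)]] t
        by simp
      then have "t * lossmix L p y1 + (1-t) * lossmix L p z1 \<le> c \<bullet> (t *\<^sub>R y + (1-t) *\<^sub>R z)"
        using hx lossmix_comb[of L p t y1 z1] by linarith
      then show "lossmix L p z1 \<le> (c \<bullet> (t *\<^sub>R y + (1-t) *\<^sub>R z) - t * lossmix L p y1) / (1-t)"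
        using t by (simp add: pos_le_divide_eq mult.commute)
    qed
    then show ?thesis using t by (simp add: pos_le_divide_eq mult.commute)
  qed
  moreover have "c \<bullet> z \<le> Vfun L S p z" using Vstar_le[of L p z S] L p K(2) cz by simp
  moreover have "(1-t) * (c \<bullet> z) \<le> (1-t) * Vfun L S p z"
    using calculation(2) t by (intro mult_left_mono) auto
  ultimately have "t * lossmix L p y1 \<le> t * (c \<bullet> y)"
    by (simp add: inner_add_right)
  then show "lossmix L p y1 \<le> c \<bullet> y" using t by simp
qed


lemma one_dir:
  assumes L: "\<And>a z. 0 \<le> L a z \<and> L a z \<le> 1"
    and F: "F \<subseteq> cell L S c \<alpha>"
    and u: "u \<in> rel_interior F" and v: "v \<in> rel_interior F"
  shows "Nset L S u \<subseteq> Nset L S v"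
proof
  fix p assume "p \<in> Nset L S u"
  then have p: "p \<in> actsimplex" and pu: "Vfun L S p u = Vstar L S u"
    by (auto simp: Nset_def regret_def)
  have RF: "rel_interior F \<subseteq> F" by (rule rel_interior_subset)
  have inF: "\<And>q. q \<in> F \<Longrightarrow> q \<in> simplexK \<and> Vstar L S q = c \<alpha> \<bullet> q"
    using F by (auto simp: cell_def)
  show "p \<in> Nset L S v"
  proof (cases "u = v")
    case True then show ?thesis using \<open>p \<in> Nset L S u\<close> by simp
  next
    case False
    obtain e where e: "e > 0" "ball u e \<inter> affine hull F \<subseteq> F"
      using u by (auto simp: mem_rel_interior_ball)
    define d where "d = e / (2 * norm (u - v))"
    have nz: "norm (u - v) > 0" using False by simp
    have d: "d > 0" using e nz by (simp add: d_def)
    define w where "w = (1 + d) *\<^sub>R u + (- d) *\<^sub>R v"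
    have "w \<in> affine hull F"
      unfolding w_def
      apply (rule mem_affine[OF affine_affine_hull])
      using u v RF by (auto intro: hull_inc)
    moreover have "dist u w < e"
    proof -
      have "u - w = d *\<^sub>R (v - u)" by (simp add: w_def algebra_simps)
      then have "dist u w = d * norm (u - v)" using d
        by (simp add: dist_norm norm_minus_commute)
      also have "\<dots> = e / 2" using nz by (simp add: d_def)
      finally show ?thesis using e by simp
    qed
    ultimately have wF: "w \<in> F" using e by (auto simp: dist_commute)
    define t where "t = d / (1 + d)"
    have t: "0 < t" "t < 1" using d by (auto simp: t_def)
    have "1 - t = 1 / (1 + d)" using d by (simp add: t_def field_simps)
    have uc: "t *\<^sub>R v + (1 - t) *\<^sub>R w = u"
    proof -
      have h1: "(1+d)*t = d" and h2: "(1+d)*(1-t) = 1"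
        using d \<open>1 - t = 1 / (1 + d)\<close> by (simp_all add: t_def)
      have "(1 + d) *\<^sub>R (t *\<^sub>R v + (1 - t) *\<^sub>R w) = ((1+d)*t) *\<^sub>R v + ((1+d)*(1-t)) *\<^sub>R w"
        by (simp only: scaleR_add_right scaleR_scaleR)
      also have "\<dots> = d *\<^sub>R v + w" by (simp only: h1 h2 scaleR_one)
      also have "\<dots> = (1 + d) *\<^sub>R u" by (simp add: w_def)
      finally have "(1 + d) *\<^sub>R (t *\<^sub>R v + (1 - t) *\<^sub>R w) = (1 + d) *\<^sub>R u" .
      then show ?thesis using d by simp
    qed
    have vK: "v \<in> simplexK" and vc: "Vstar L S v = c \<alpha> \<bullet> v" using inF v RF by auto
    have wK: "w \<in> simplexK" and wc: "Vstar L S w = c \<alpha> \<bullet> w" using inF wF by auto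
    have uc2: "Vstar L S u = c \<alpha> \<bullet> u" using inF u RF by auto
    have "Vfun L S p v \<le> c \<alpha> \<bullet> v"
      by (rule key[OF L p vK wK t vc wc]) (simp add: uc pu uc2)
    moreover have "Vstar L S v \<le> Vfun L S p v" using Vstar_le[of L p v S] L p vK by simp
    ultimately show ?thesis using p vc by (simp add: Nset_def regret_def)
  qed
qed

theorem lemma5:
  fixes L :: "'a::finite \<Rightarrow> 'z::finite \<Rightarrow> real"
    and S :: "'a \<Rightarrow> 'z \<Rightarrow> 'b"
    and m :: nat and c :: "nat \<Rightarrow> real^'z"
    and F :: "(real^'z) set" and \<alpha> :: nat and x y :: "real^'z"
  assumes "\<And>a z. 0 \<le> L a z \<and> L a z \<le> 1"
    and "min_rep L S m c"
    and "\<alpha> < m"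
    and "F face_of cell L S c \<alpha>"
    and "x \<in> rel_interior F" and "y \<in> rel_interior F"
  shows "Nset L S x = Nset L S y"
  using one_dir[OF assms(1) face_of_imp_subset[OF assms(4)] assms(5,6)]
    one_dir[OF assms(1) face_of_imp_subset[OF assms(4)] assms(6,5)] by blast

end
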